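(* Let $d\ge2$ be an integer, $p\in(0,1]$, $\lambda\in(0,1)$, $b=1-(1-p)\lambda$, $\bar F$ the solution of $\bar F'(w)=\lambda(p\bar F(w)^d+(1-p)\bar F(w))-\bar F(w)$, $\bar F(0)=\lambda$, and $Q_\lambda=\int_0^\infty\bar F(w)\,dw$. Define $$\tilde Q_\lambda=\frac{\lambda}{b}\left(1+\frac1{d-1}\log\left(\frac{b}{b-p\lambda^d}\right)\right).$$ Then $$\tilde Q_\lambda-\frac{\lambda^{d+1}}{p(d-1)^2b^2}\cdot\frac{\pi^2}{6}\le Q_\lambda\le\tilde Q_\lambda.$$ *)

theory Defs
  imports "HOL-Analysis.Analysis"
begin

definition Qtilde :: "nat \<Rightarrow> real \<Rightarrow> real \<Rightarrow> real" where
  "Qtilde d p lam = (let b = 1 - (1 - p) * lam in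
     lam / b * (1 + 1 / (real d - 1) * ln (b / (b - p * lam ^ d))))"

end

theory Submission imports Defs "HOL-Real_Asymp.Real_Asymp" begin

locale ode =
  fixes m :: nat and p lam :: real and F :: "real \<Rightarrow> real"
  assumes p0: "0 < p" and p1: "p \<le> 1" and l0: "0 < lam" and l1: "lam < 1"
  and F0: "F 0 = lam"
  and Fd: "\<And>w. w \<ge> 0 \<Longrightarrow> (F has_real_derivative (lam * (p * F w ^ Suc (Suc m) + (1 - p) * F w) - F w)) (at w within {0..})"
begin

definition "b = 1 - (1-p)*lam"
definition "r = p*lam^Suc (Suc m) / b"
definition "k = real (Suc m) * b"
definition "D w = r + (1-r)*exp(k*w)"
definition "tau w = 1 / D w"

lemma b_pos: "0 < b" and b_le: "b \<le> 1" and p_le_b: "p \<le> b"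
proof -
  have "(1-p)*lam \<le> lam" using p0 p1 l0 by (simp add: mult_left_le_one_le)
  moreover have "0 \<le> (1-p)*lam" using p1 l0 by simp
  moreover have "0 \<le> (1-p)*(1-lam)" using p1 l1 by simp
  ultimately show "0 < b" "b \<le> 1" "p \<le> b" unfolding b_def using l1 by (auto simp: algebra_simps)
qed

lemma a_lt_b: "p*lam^Suc (Suc m) < b"
proof -
  have "lam^Suc (Suc m) < 1" using l0 l1 by (rule power_Suc_less_one)
  hence "p*lam^Suc (Suc m) < p" using p0 by simp
  moreover have "p \<le> b" by (rule p_le_b)
  ultimately show ?thesis by simp
qed

lemma r_pos: "0 < r" and r_lt: "r < 1"
  proof -
  have "0 < p*lam^Suc (Suc m)" using p0 l0 by simp
  thus "0 < r" "r < 1" using a_lt_b b_pos unfolding r_def by (auto simp: divide_less_eq)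
qed

lemma k_pos: "0 < k" using b_pos unfolding k_def by simp

lemma D_pos: "0 < D w" 
proof -
  have "0 \<le> (1-r)*exp(k*w)" using r_lt by simp
  thus ?thesis using r_pos unfolding D_def by simp
qed

lemma D_ge1: "w \<ge> 0 \<Longrightarrow> D w \<ge> 1"
proof -
  assume "w \<ge> 0"
  hence "1 \<le> exp(k*w)" using k_pos by simp
  hence "(1-r)*1 \<le> (1-r)*exp(k*w)" using r_lt by (intro mult_left_mono) auto
  thus ?thesis unfolding D_def by simp
qed

lemma D0: "D 0 = 1" unfolding D_def by simp

lemma D_mono: "w \<le> v \<Longrightarrow> D w \<le> D v" unfolding D_def using r_lt k_pos
  by (simp add: mult_left_mono)

lemma tau_pos: "0 < tau w" unfolding tau_def using D_pos by simp
lemma tau_le1: "w \<ge> 0 \<Longrightarrow> tau w \<le> 1" using D_ge1[of w] by (simp add: tau_def)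

lemma D_deriv: "(D has_real_derivative (k*(D w - r))) (at w)"
  unfolding D_def by (auto intro!: derivative_eq_intros)

lemma tau_deriv: "(tau has_real_derivative (-k*tau w*(1 - r*tau w))) (at w)"
proof -
  have "(tau has_real_derivative (-(k*(D w - r)) / (D w)^2)) (at w)"
    unfolding tau_def using D_pos[of w]
    by (auto intro!: derivative_eq_intros D_deriv simp: power2_eq_square)
  moreover have "-(k*(D w - r)) / (D w)^2 = -k*tau w*(1 - r*tau w)"
    unfolding tau_def using D_pos[of w] by (simp add: field_simps power2_eq_square)
  ultimately show ?thesis by simp
qed

lemma Fcont: "continuous_on {0..} F"
  by (rule DERIV_continuous_on[OF Fd]) auto

lemma br: "b*r = p*lam^Suc(Suc m)" unfolding r_def using b_pos by simp

lemma E_deriv: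
  assumes w: "w \<ge> 0"
  shows "((\<lambda>w. F w ^ Suc m * D w - lam^Suc m) has_real_derivative
     (real (Suc m)*p*lam*F w^Suc m*(F w^Suc m*D w - lam^Suc m))) (at w within {0..})"
proof -
  have alg: "real (Suc m) * x^m * (lam*(p*x^Suc(Suc m) + (1-p)*x) - x) * Dw + x^Suc m * (k*(Dw - r))
   = real (Suc m)*p*lam*x^Suc m*(x^Suc m*Dw - lam^Suc m)" for x Dw
  proof -
    have e: "x^Suc m * ((real (Suc m) * b)*(Dw - r)) = real (Suc m) * x^Suc m * b * Dw - real (Suc m) * x^Suc m * (b*r)"
      by (simp add: algebra_simps)
    show ?thesis unfolding k_def e br unfolding b_def by (simp add: algebra_simps power_Suc)
  qed
  show ?thesis
    apply (subst alg[symmetric])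
    apply (rule derivative_eq_intros Fd[OF w] DERIV_subset[OF D_deriv subset_UNIV] refl)+
    by (simp add: algebra_simps)
qed

lemma ftc_real:
  assumes "lo \<le> hi" "\<And>x. x \<in> {lo..hi} \<Longrightarrow> (f has_real_derivative f' x) (at x within {lo..hi})"
  shows "(f' has_integral (f hi - f lo)) {lo..hi}"
  using assms by (intro fundamental_theorem_of_calculus) (auto simp: has_real_derivative_iff_has_vector_derivative)

lemma FnD: assumes T: "T \<ge> 0" shows "F T ^ Suc m * D T = lam^Suc m"
proof -
  define E where "E w = F w ^ Suc m * D w - lam^Suc m" for w
  define a where "a w = real (Suc m)*p*lam*F w^Suc m" for w
  have ca: "continuous_on {0..T} a" unfolding a_def
    by (intro continuous_intros continuous_on_subset[OF Fcont]) auto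
  obtain x0 where "x0 \<in> {0..T}" and x0: "\<And>y. y \<in> {0..T} \<Longrightarrow> a y \<le> a x0"
    using continuous_attains_sup[OF compact_Icc _ ca] T by auto
  define K where "K = a x0"
  define V where "V w = E w ^ 2 * exp (-2*K*w)" for w
  have dV: "(V has_real_derivative (2*(a w - K)*(E w)^2*exp(-2*K*w))) (at w within {0..T})"
    if w: "w \<in> {0..T}" for w
  proof -
    have dE: "(E has_real_derivative a w * E w) (at w within {0..T})"
      using DERIV_subset[OF E_deriv, of w "{0..T}"] w unfolding E_def a_def by auto
    show ?thesis unfolding V_def
      by (rule derivative_eq_intros dE refl)+ (simp add: algebra_simps power2_eq_square)
  qed
  have "((\<lambda>w. 2*(a w - K)*(E w)^2*exp(-2*K*w)) has_integral (V T - V 0)) {0..T}"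
    by (rule ftc_real[OF T dV])
  moreover have "((\<lambda>w. 0) has_integral 0) {0..T}" by (rule has_integral_0)
  moreover have "2*(a w - K)*(E w)^2*exp(-2*K*w) \<le> 0" if "w \<in> {0..T}" for w
  proof -
    have "a w - K \<le> 0" using x0[OF that] unfolding K_def by simp
    moreover have "0 \<le> (E w)^2*exp(-2*K*w)" by simp
    ultimately show ?thesis by (simp add: mult_nonpos_nonneg mult.assoc)
  qed
  ultimately have "V T - V 0 \<le> 0" by (rule has_integral_le)
  moreover have "V 0 = 0" unfolding V_def E_def using F0 D0 by simp
  ultimately have "E T ^ 2 * exp (-2*K*T) \<le> 0" unfolding V_def by simp
  hence "E T ^ 2 \<le> 0" by (simp add: mult_le_0_iff)
  hence "E T = 0" by simp
  thus ?thesis unfolding E_def by simp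
qed

lemma Fpos: assumes w: "w \<ge> 0" shows "0 < F w"
proof (rule ccontr)
  assume "\<not> 0 < F w"
  hence "F w \<le> 0" by simp
  moreover have "0 \<le> F 0" using F0 l0 by simp
  moreover have "continuous_on {0..w} F" using Fcont by (rule continuous_on_subset) auto
  ultimately obtain x where x: "0 \<le> x" "x \<le> w" "F x = 0" using IVT2'[of F w 0 0] w by auto
  have "lam^Suc m = 0" using FnD[OF x(1)] x(3) by simp
  thus False using l0 by simp
qed

lemma Fn: assumes w: "w \<ge> 0" shows "F w ^ Suc m = lam ^ Suc m * tau w"
  using FnD[OF w] D_pos[of w] unfolding tau_def by (simp add: field_simps)

lemma F_le: assumes w: "w \<ge> 0" shows "F w \<le> lam"
proof -
  have "F w ^ Suc m \<le> lam ^ Suc m" using Fn[OF w] tau_le1[OF w] tau_pos[of w] l0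
    by (simp add: mult_left_le_one_le)
  from power_le_imp_le_base[OF this] show ?thesis using l0 by simp
qed

lemma lnF: assumes w: "w \<ge> 0" shows "ln (F w) = ln lam + ln (tau w) / real (Suc m)"
proof -
  have "real (Suc m) * ln (F w) = ln (F w ^ Suc m)" by (rule ln_realpow[symmetric])
  also have "\<dots> = real (Suc m) * ln lam + ln (tau w)" unfolding Fn[OF w]
    using l0 tau_pos[of w] by (simp add: ln_mult ln_realpow algebra_simps)
  finally show ?thesis by (simp add: field_simps)
qed

lemma gap: assumes w: "w \<ge> 0" shows "lam - F w \<le> lam * (- ln (tau w)) / real (Suc m)"
proof -
  have "F w = exp (ln (F w))" using Fpos[OF w] by simp
  also have "\<dots> = lam * exp (ln (tau w) / real (Suc m))" unfolding lnF[OF w] exp_add using l0 by simp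
  finally have "F w = lam * exp (ln (tau w) / real (Suc m))" .
  moreover have "1 + ln (tau w) / real (Suc m) \<le> exp (ln (tau w) / real (Suc m))" by (rule exp_ge_add_one_self)
  ultimately have "lam * (1 + ln (tau w) / real (Suc m)) \<le> F w" using l0 by simp
  thus ?thesis by (simp add: field_simps)
qed

definition "G j s = s^(Suc j) * (1/(real j + 1)^2 - ln s/(real j + 1))" for j :: nat and s :: real
definition "Phi N w = (\<Sum>j<N. r^j * G j (tau w))" for N :: nat and w :: real

lemma G_deriv: assumes s: "0 < s" shows "(G j has_real_derivative (- (s^j) * ln s)) (at s)"
proof -
  have e: "real (Suc j) * s ^ j * (1/(real j + 1)^2 - ln s/(real j + 1)) + s^Suc j * (- (inverse s / (real j + 1)))
      = - (s^j) * ln s"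
  proof -
    have gen: "J * s ^ j * (1 / J ^ 2 - L / J) + (s * s ^ j) * (- (inverse s / J)) = - (s ^ j) * L" if "J \<noteq> 0" for J L
      using s that by (simp add: field_simps power2_eq_square)
    have j1: "real j + 1 \<noteq> 0" "real (Suc j) = real j + 1" by auto
    show ?thesis using gen[OF j1(1), of "ln s"] unfolding j1(2) by simp
  qed
  show ?thesis unfolding G_def[abs_def]
    apply (subst e[symmetric])
    apply (rule derivative_eq_intros refl | use s in simp)+
    done
qed

lemma G_nonneg: assumes "0 < s" "s \<le> 1" shows "0 \<le> G j s"
proof -
  have "ln s \<le> 0" using assms by simp
  hence "ln s/(real j + 1) \<le> 0" by (simp add: divide_nonpos_pos)
  moreover have "0 \<le> 1/(real j + 1)^2" by simp
  ultimately have "0 \<le> 1/(real j + 1)^2 - ln s/(real j + 1)" by linarith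
  thus ?thesis unfolding G_def using assms by simp
qed

lemma Phi_deriv: "(Phi N has_real_derivative (k * tau w * ln (tau w) * (1 - (r * tau w)^N))) (at w)"
proof (induction N)
  case 0
  show ?case unfolding Phi_def[abs_def] by simp
next
  case (Suc N)
  have dG: "((\<lambda>w. G N (tau w)) has_real_derivative (- (tau w^N) * ln (tau w)) * (-k*tau w*(1 - r*tau w))) (at w)"
    by (rule DERIV_chain2[OF G_deriv[OF tau_pos] tau_deriv])
  have eq: "Phi (Suc N) = (\<lambda>w. Phi N w + r^N * G N (tau w))"
    unfolding Phi_def[abs_def] by simp
  have "(Phi (Suc N) has_real_derivative (k * tau w * ln (tau w) * (1 - (r * tau w)^N) +
     r^N * ((- (tau w^N) * ln (tau w)) * (-k*tau w*(1 - r*tau w))))) (at w)"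
    unfolding eq by (intro DERIV_add Suc DERIV_cmult dG)
  moreover have "k * tau w * ln (tau w) * (1 - (r * tau w)^N) +
     r^N * ((- (tau w^N) * ln (tau w)) * (-k*tau w*(1 - r*tau w))) = k * tau w * ln (tau w) * (1 - (r * tau w)^Suc N)"
    by (simp add: algebra_simps power_mult_distrib)
  ultimately show ?case by simp
qed

lemma tau_cont: "continuous_on S tau"
  using tau_deriv by (intro DERIV_continuous_on) (rule DERIV_subset, auto)

lemma Phi0: "Phi N 0 \<le> pi^2/6"
proof -
  have t0: "tau 0 = 1" unfolding tau_def D0 by simp
  have "Phi N 0 = (\<Sum>j<N. r^j * (1/(real j + 1)^2))" unfolding Phi_def G_def t0 by simp
  also have "\<dots> \<le> (\<Sum>j<N. 1/(real j + 1)^2)"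
  proof (intro sum_mono)
    fix j assume "j \<in> {..<N}"
    have "r^j \<le> 1" using r_pos r_lt by (simp add: power_le_one)
    from divide_right_mono[OF this, of "(real j + 1)^2"]
    show "r^j * (1/(real j + 1)^2) \<le> 1/(real j + 1)^2" by simp
  qed
  also have "\<dots> \<le> (\<Sum>j. 1/(real j + 1)^2)"
    using inverse_squares_sums by (intro sum_le_suminf) (auto simp: sums_iff add.commute)
  also have "\<dots> = pi^2/6" using inverse_squares_sums by (simp add: sums_iff add.commute)
  finally show ?thesis .
qed

lemma Phi_nonneg: assumes "w \<ge> 0" shows "0 \<le> Phi N w"
  unfolding Phi_def using r_pos tau_pos[of w] tau_le1[OF assms]
  by (intro sum_nonneg mult_nonneg_nonneg G_nonneg) auto

lemma ln_tau: "- ln (tau w) = ln (D w)"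
  unfolding tau_def using D_pos[of w] by (simp add: ln_div)

lemma tl_cont: "continuous_on S (\<lambda>w. tau w * (- ln (tau w)))"
proof -
  have "tau x \<noteq> 0" for x using tau_pos[of x] by simp
  thus ?thesis by (intro continuous_intros tau_cont) auto
qed

lemma tl_int: assumes T: "T \<ge> 0"
  shows "(\<lambda>w. tau w * (- ln (tau w))) integrable_on {0..T}"
    and "integral {0..T} (\<lambda>w. tau w * (- ln (tau w))) \<le> pi^2/6 / k"
proof -
  show int: "(\<lambda>w. tau w * (- ln (tau w))) integrable_on {0..T}"
    by (rule integrable_continuous_interval[OF tl_cont])
  define I where "I = k * integral {0..T} (\<lambda>w. tau w * (- ln (tau w)))"
  define C where "C = k * ln (D T)"
  have hi: "((\<lambda>w. k * (tau w * (- ln (tau w)))) has_integral I) {0..T}"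
    unfolding I_def by (intro has_integral_mult_right integrable_integral int)
  have bound: "I \<le> pi^2/6 + (T * C) * r^N" for N
  proof -
    have ph: "((\<lambda>w. k * tau w * ln (tau w) * (1 - (r * tau w)^N)) has_integral (Phi N T - Phi N 0)) {0..T}"
      by (rule ftc_real[OF T]) (rule DERIV_subset[OF Phi_deriv], auto)
    have s: "((\<lambda>w. k * (tau w * (- ln (tau w))) + k * tau w * ln (tau w) * (1 - (r * tau w)^N))
        has_integral (I + (Phi N T - Phi N 0))) {0..T}"
      by (rule has_integral_add[OF hi ph])
    have c: "((\<lambda>w. C * r^N) has_integral (T * (C * r^N))) {0..T}"
      using has_integral_const_real[of "C * r^N" 0 T] T by simp
    have pw: "k * (tau w * (- ln (tau w))) + k * tau w * ln (tau w) * (1 - (r * tau w)^N) \<le> C * r^N"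
      if w: "w \<in> {0..T}" for w
    proof -
      have e: "k * (tau w * (- ln (tau w))) + k * tau w * ln (tau w) * (1 - (r * tau w)^N)
           = k * (tau w * tau w ^ N * r ^ N) * ln (D w)"
        unfolding ln_tau[symmetric] by (simp add: algebra_simps power_mult_distrib)
      have t1: "tau w * tau w ^ N \<le> 1" using tau_pos[of w] tau_le1[of w] w
        by (simp add: power_le_one mult_le_one)
      have "tau w * tau w ^ N * r ^ N \<le> r ^ N"
        using mult_right_mono[OF t1, of "r^N"] r_pos by simp
      moreover have "ln (D w) \<le> ln (D T)" using D_mono[of w T] w D_pos[of w] by simp
      moreover have "0 \<le> ln (D w)" using D_ge1[of w] w by simp
      moreover have "0 \<le> tau w * tau w ^ N * r ^ N" using tau_pos[of w] r_pos by simp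
      moreover have "0 \<le> r^N" using r_pos by simp
      ultimately have "(tau w * tau w ^ N * r ^ N) * ln (D w) \<le> r^N * ln (D T)"
        by (intro mult_mono) auto
      hence "k * ((tau w * tau w ^ N * r ^ N) * ln (D w)) \<le> k * (r^N * ln (D T))"
        using k_pos by (intro mult_left_mono) auto
      thus ?thesis unfolding e C_def by (simp add: algebra_simps)
    qed
    have "I + (Phi N T - Phi N 0) \<le> T * (C * r^N)"
      by (rule has_integral_le[OF s c pw])
    thus ?thesis using Phi_nonneg[OF T, of N] Phi0[of N] by (simp add: algebra_simps)
  qed
  have "norm r < 1" using r_pos r_lt by simp
  hence "(\<lambda>N. r^N) \<longlonglongrightarrow> 0" by (rule LIMSEQ_power_zero)
  hence "(\<lambda>N. pi^2/6 + (T * C) * r^N) \<longlonglongrightarrow> pi^2/6 + (T*C) * 0" by (intro tendsto_add tendsto_const tendsto_mult)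
  hence "(\<lambda>N. pi^2/6 + (T * C) * r^N) \<longlonglongrightarrow> pi^2/6" by simp
  hence "I \<le> pi^2/6" using bound by (intro tendsto_lowerbound) (auto intro: always_eventually)
  thus "integral {0..T} (\<lambda>w. tau w * (- ln (tau w))) \<le> pi^2/6 / k"
    unfolding I_def using k_pos by (simp add: field_simps)
qed

definition "c1 = p*lam^Suc(Suc(Suc m))"
definition "T1 w = -(1/(k*r)) * ln (r*exp(-k*w) + 1 - r)"
definition "Fp w = lam*(p*F w^Suc(Suc m) + (1-p)*F w) - F w"
definition "U w = (c1 * T1 w - F w)/b"

lemma T1_deriv: "(T1 has_real_derivative tau w) (at w)"
proof -
  have pos: "0 < r*exp(-k*w) + 1 - r" using r_pos r_lt by (smt (verit) exp_gt_zero mult_pos_pos)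
  have e: "-(1/(k*r)) * ((r * (exp(-k*w) * (- k))) / (r*exp(-k*w) + 1 - r)) = tau w"
  proof -
    define E1 where "E1 = exp(-k*w)"
    define E2 where "E2 = exp(k*w)"
    have p12: "E1 * E2 = 1" unfolding E1_def E2_def by (simp add: exp_add[symmetric])
    have d2: "r + (1-r)*E2 \<noteq> 0" using D_pos[of w] unfolding D_def E2_def by simp
    have d1: "r*E1 + 1 - r \<noteq> 0" using pos unfolding E1_def by simp
    have "-(1/(k*r)) * ((r * (E1 * (- k))) / (r*E1 + 1 - r)) = E1 / (r*E1 + 1 - r)"
      using k_pos r_pos d1 by (simp add: field_simps)
    also have "\<dots> = 1 / (r + (1-r)*E2)"
    proof (subst frac_eq_eq[OF d1 d2])
      have "E1*(r+(1-r)*E2) = r*E1 + (1-r)*(E1*E2)" by (simp add: algebra_simps)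
      thus "E1 * (r + (1 - r) * E2) = 1 * (r * E1 + 1 - r)" unfolding p12 by simp
    qed
    finally show ?thesis unfolding tau_def D_def E1_def E2_def .
  qed
  show ?thesis unfolding T1_def[abs_def]
    apply (subst e[symmetric])
    apply (rule derivative_eq_intros refl | use pos in simp)+
    done
qed

lemma U_deriv: assumes w: "w \<ge> 0" shows "(U has_real_derivative (c1*tau w - Fp w)/b) (at w within {0..})"
  unfolding U_def[abs_def] Fp_def
  apply (rule derivative_eq_intros Fd[OF w] DERIV_subset[OF T1_deriv subset_UNIV] refl)+
  using b_pos by (auto simp: field_simps)

lemma Fp_eq: assumes w: "w \<ge> 0" shows "b * F w = p*lam*lam^Suc m*tau w*F w - Fp w"
proof -
  have "F w^Suc(Suc m) = F w^Suc m * F w" by simp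
  hence "F w^Suc(Suc m) = lam^Suc m*tau w*F w" using Fn[OF w] by simp
  thus ?thesis unfolding Fp_def b_def by (simp add: algebra_simps)
qed

lemma up_pw: assumes w: "w \<ge> 0" shows "F w \<le> (c1*tau w - Fp w)/b"
proof -
  have "p*lam*lam^Suc m*tau w*F w \<le> p*lam*lam^Suc m*tau w*lam"
    using F_le[OF w] p0 l0 tau_pos[of w] by (intro mult_left_mono) auto
  hence "b * F w \<le> c1*tau w - Fp w" unfolding Fp_eq[OF w] c1_def by (simp add: algebra_simps)
  thus ?thesis using b_pos by (simp add: field_simps)
qed

lemma low_pw: assumes w: "w \<ge> 0"
  shows "(c1*tau w - Fp w)/b - (c1/(b*real(Suc m)))*(tau w*(-ln(tau w))) \<le> F w"
proof -
  have "p*lam*lam^Suc m*tau w*(lam - F w) \<le> p*lam*lam^Suc m*tau w*(lam * (- ln (tau w)) / real (Suc m))"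
    using gap[OF w] p0 l0 tau_pos[of w] by (intro mult_left_mono) auto
  hence "c1*tau w - Fp w - c1*(tau w*(-ln(tau w)))/real(Suc m) \<le> b * F w"
    unfolding Fp_eq[OF w] c1_def by (simp add: algebra_simps)
  hence "(c1*tau w - Fp w - c1*(tau w*(-ln(tau w)))/real(Suc m))/b \<le> b * F w / b"
    using b_pos by (intro divide_right_mono) auto
  moreover have "(c1*tau w - Fp w)/b - (c1/(b*real(Suc m)))*(tau w*(-ln(tau w)))
     = (c1*tau w - Fp w - c1*(tau w*(-ln(tau w)))/real(Suc m))/b"
  proof -
    have gen: "X/b - (c1/(b*nn))*Z = (X - c1*Z/nn)/b" if "nn \<noteq> 0" for X Z nn :: real
      using that b_pos by (simp add: field_simps)
    show ?thesis by (rule gen) simp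
  qed
  ultimately show ?thesis using b_pos by simp
qed

lemma F_int: "F integrable_on {0..T}"
  by (rule integrable_continuous_interval) (rule continuous_on_subset[OF Fcont], auto)

lemma U_int: assumes T: "T \<ge> 0"
  shows "((\<lambda>w. (c1*tau w - Fp w)/b) has_integral (U T - U 0)) {0..T}"
  by (rule ftc_real[OF T]) (rule DERIV_subset[OF U_deriv], auto)

lemma int_up: assumes T: "T \<ge> 0" shows "integral {0..T} F \<le> U T - U 0"
  by (rule has_integral_le[OF integrable_integral[OF F_int] U_int[OF T]]) (auto intro: up_pw)

lemma int_low: assumes T: "T \<ge> 0"
  shows "U T - U 0 - (c1/(b*real(Suc m)))*(pi^2/6/k) \<le> integral {0..T} F"
proof -
  have h: "((\<lambda>w. (c1*tau w - Fp w)/b - (c1/(b*real(Suc m)))*(tau w*(-ln(tau w)))) has_integral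
     (U T - U 0 - (c1/(b*real(Suc m))) * integral {0..T} (\<lambda>w. tau w * (- ln (tau w))))) {0..T}"
    by (intro has_integral_diff U_int[OF T] has_integral_mult_right integrable_integral tl_int(1)[OF T])
  have "U T - U 0 - (c1/(b*real(Suc m))) * integral {0..T} (\<lambda>w. tau w * (- ln (tau w))) \<le> integral {0..T} F"
    by (rule has_integral_le[OF h integrable_integral[OF F_int]], rule low_pw, simp)
  moreover have "(c1/(b*real(Suc m))) * integral {0..T} (\<lambda>w. tau w * (- ln (tau w))) \<le> (c1/(b*real(Suc m)))*(pi^2/6/k)"
    using tl_int(2)[OF T] b_pos p0 l0 unfolding c1_def by (intro mult_left_mono) auto
  ultimately show ?thesis by simp
qed

lemma tau_lim: "(tau \<longlongrightarrow> 0) at_top"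
proof -
  have "((\<lambda>T. 1/(r + (1-r)*exp(k*T))) \<longlongrightarrow> 0) at_top"
    using k_pos r_pos r_lt by real_asymp
  thus ?thesis unfolding tau_def[abs_def] D_def by simp
qed

lemma F_lim: "(F \<longlongrightarrow> 0) at_top"
proof -
  have ev: "eventually (\<lambda>T. (lam^Suc m * tau T) powr (1/real (Suc m)) = F T) at_top"
  proof (rule eventually_at_top_linorderI[of 0])
    fix T :: real assume T: "T \<ge> 0"
    have "(lam^Suc m * tau T) powr (1/real (Suc m)) = (F T ^ Suc m) powr (1/real (Suc m))"
      using Fn[OF T] by simp
    also have "\<dots> = (F T powr real (Suc m)) powr (1/real (Suc m))"
      using powr_realpow[OF Fpos[OF T], of "Suc m"] by simp
    also have "\<dots> = F T" using Fpos[OF T] by (simp add: powr_powr)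
    finally show "(lam^Suc m * tau T) powr (1/real (Suc m)) = F T" .
  qed
  have "((\<lambda>T. lam^Suc m * tau T) \<longlongrightarrow> lam^Suc m * 0) at_top"
    by (intro tendsto_mult tendsto_const tau_lim)
  hence "((\<lambda>T. (lam^Suc m * tau T) powr (1/real (Suc m))) \<longlongrightarrow> 0) at_top"
    using tau_pos l0 by (intro tendsto_zero_powrI[where b="1/real (Suc m)"]) (auto intro!: always_eventually less_imp_le)
  thus ?thesis using tendsto_cong[OF ev] by simp
qed

definition "L0 = (c1*(-(1/(k*r))*ln(1-r)) + lam)/b"
definition "Err = c1/(b*real(Suc m))*(pi^2/6/k)"

lemma T1_0: "T1 0 = 0" unfolding T1_def by simp

lemma U_lim: "((\<lambda>T. U T - U 0) \<longlongrightarrow> L0) at_top"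
proof -
  have "((\<lambda>T. ln (r*exp(-k*T) + 1 - r)) \<longlongrightarrow> ln (1 - r)) at_top"
    using k_pos r_pos r_lt by real_asymp
  hence t1: "(T1 \<longlongrightarrow> -(1/(k*r))*ln(1-r)) at_top"
    unfolding T1_def[abs_def] by (intro tendsto_mult tendsto_const)
  have "((\<lambda>T. (c1 * T1 T - F T)/b - U 0) \<longlongrightarrow> (c1*(-(1/(k*r))*ln(1-r)) - 0)/b - U 0) at_top"
    by (intro tendsto_intros t1 F_lim) (use b_pos in simp)
  moreover have "(c1*(-(1/(k*r))*ln(1-r)) - 0)/b - U 0 = L0"
    unfolding L0_def U_def T1_0 F0 using b_pos by (simp add: field_simps)
  ultimately show ?thesis unfolding U_def[abs_def] by simp
qed

lemma U_le: assumes T: "T \<ge> 0" shows "U T - U 0 \<le> L0"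
proof -
  have a1: "0 < 1 - r" "1 - r \<le> r*exp(-k*T) + 1 - r" using r_pos r_lt by auto
  have "ln (1 - r) \<le> ln (r*exp(-k*T) + 1 - r)" using a1 by (subst ln_le_cancel_iff) auto
  hence "ln (1 - r) / (k*r) \<le> ln (r*exp(-k*T) + 1 - r) / (k*r)" using k_pos r_pos
    by (intro divide_right_mono) auto
  hence "T1 T \<le> -(1/(k*r))*ln(1-r)" unfolding T1_def by simp
  hence "c1 * T1 T \<le> c1 * (-(1/(k*r))*ln(1-r))" using p0 l0 unfolding c1_def
    by (intro mult_left_mono) auto
  moreover have "0 \<le> F T" using Fpos[OF T] by simp
  ultimately have "c1 * T1 T - F T + lam \<le> c1*(-(1/(k*r))*ln(1-r)) + lam" by simp
  hence "(c1 * T1 T - F T + lam)/b \<le> L0" unfolding L0_def using b_pos by (intro divide_right_mono) auto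
  moreover have "U T - U 0 = (c1 * T1 T - F T + lam)/b" unfolding U_def T1_0 F0 using b_pos by (simp add: field_simps)
  ultimately show ?thesis by simp
qed

lemma main:
  "F integrable_on {0..} \<and> L0 - Err \<le> integral {0..} F \<and> integral {0..} F \<le> L0"
proof -
  define g where "g T = integral {0..T} F" for T
  define l where "l = Sup (g ` {0..})"
  have gle: "g T \<le> L0" if "T \<ge> 0" for T
    using int_up[OF that] U_le[OF that] unfolding g_def by simp
  have bdd: "bdd_above (g ` {0..})" using gle by (auto intro!: bdd_aboveI)
  have mono: "g T \<le> g T'" if "0 \<le> T" "T \<le> T'" for T T'
    unfolding g_def using that Fpos by (intro integral_subset_le F_int) (auto intro: less_imp_le)
  have lim: "(g \<longlongrightarrow> l) at_top"
  proof (rule increasing_tendsto)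
    show "eventually (\<lambda>T. g T \<le> l) at_top"
      using bdd unfolding l_def by (intro eventually_at_top_linorderI[of 0] cSUP_upper) auto
    fix x assume "x < l"
    then obtain y0 where y0: "y0 \<in> {0..}" "x < g y0" unfolding l_def using less_cSUP_iff[OF _ bdd] by auto
    show "eventually (\<lambda>T. x < g T) at_top"
      using y0 mono by (intro eventually_at_top_linorderI[of y0]) (auto intro: less_le_trans)
  qed
  have hi: "(F has_integral l) {0..}"
  proof (rule has_integral_to_inf[OF F_int])
    show "((\<lambda>y. integral {0..y} F) \<longlongrightarrow> l) at_top" using lim unfolding g_def[abs_def] .
    show "\<And>y. 0 \<le> y \<Longrightarrow> 0 \<le> F y" using Fpos less_imp_le by blast
  qed
  have "l \<le> L0" unfolding l_def using gle by (intro cSUP_least) auto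
  moreover have "L0 - Err \<le> l"
  proof (rule tendsto_le[OF trivial_limit_at_top_linorder lim])
    show "((\<lambda>T. U T - U 0 - Err) \<longlongrightarrow> L0 - Err) at_top" by (intro tendsto_intros U_lim)
    show "eventually (\<lambda>T. U T - U 0 - Err \<le> g T) at_top"
      using int_low unfolding g_def Err_def by (intro eventually_at_top_linorderI[of 0]) auto
  qed
  ultimately show ?thesis using hi by (auto simp: integral_unique)
qed

lemma L0_eq: "L0 = lam/b * (1 + 1/real (Suc m) * ln (b/(b - p*lam^Suc (Suc m))))"
proof -
  have a: "0 < p*lam^Suc(Suc m)" using p0 l0 by simp
  have kr: "k*r = real (Suc m) * (p*lam^Suc(Suc m))" unfolding k_def r_def using b_pos by simp
  have c1e: "c1 = lam * (p*lam^Suc(Suc m))" unfolding c1_def by simp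
  have gen: "lam * A * (1/(nn * A)) = lam / nn" if "A \<noteq> 0" for A nn :: real
    using that by (simp add: field_simps)
  have ck: "c1 * (1/(k*r)) = lam / real (Suc m)" unfolding kr c1e by (rule gen) (use a in linarith)
  have omr: "1 - r = (b - p*lam^Suc (Suc m))/b" unfolding r_def using b_pos by (simp add: field_simps)
  have lnq: "ln (b/(b - p*lam^Suc (Suc m))) = - ln (1 - r)"
    unfolding omr using b_pos a_lt_b by (simp add: ln_div)
  have s1: "c1*(-(1/(k*r))*ln(1-r)) = -(c1*(1/(k*r)))*ln(1-r)" by (simp only: mult_minus_left mult_minus_right mult.assoc)
  have gen2: "(-(lam/nn)*X + lam)/b = lam/b*(1 + 1/nn*(-X))" if "nn \<noteq> 0" for nn X :: real
    using that b_pos by (simp add: field_simps)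
  show ?thesis unfolding L0_def lnq s1 ck by (rule gen2) simp
qed

lemma Err_le: "Err \<le> lam^(Suc (Suc (Suc m))) / (p * (real (Suc m))^2 * b^2) * (pi^2/6)"
proof -
  have e: "Err = p * (lam^(Suc (Suc (Suc m))) / ((real (Suc m))^2 * b^2) * (pi^2/6))"
    unfolding Err_def c1_def k_def using b_pos by (simp add: field_simps power2_eq_square)
  have "p \<le> 1/p" using p0 p1 by (simp add: field_simps) (metis mult_le_one less_imp_le)
  hence "p * (lam^(Suc (Suc (Suc m))) / ((real (Suc m))^2 * b^2) * (pi^2/6))
      \<le> (1/p) * (lam^(Suc (Suc (Suc m))) / ((real (Suc m))^2 * b^2) * (pi^2/6))"
    using l0 by (intro mult_right_mono) auto
  thus ?thesis unfolding e by (simp add: field_simps)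
qed

end

theorem proposition4p8:
  fixes d :: nat and p lam :: real and F :: "real \<Rightarrow> real"
  assumes "d \<ge> 2" and "0 < p" and "p \<le> 1" and "0 < lam" and "lam < 1"
    and "F 0 = lam"
    and "\<And>w. w \<ge> 0 \<Longrightarrow>
      (F has_real_derivative (lam * (p * F w ^ d + (1 - p) * F w) - F w)) (at w within {0..})"
  shows "F integrable_on {0..} \<and>
    Qtilde d p lam - lam ^ (d + 1) / (p * (real d - 1)^2 * (1 - (1 - p) * lam)^2) * (pi^2 / 6)
      \<le> integral {0..} F \<and>
    integral {0..} F \<le> Qtilde d p lam"
proof -
  obtain m where d: "d = Suc (Suc m)" using assms(1) by (metis add_2_eq_Suc le_Suc_ex)
  interpret ode m p lam F
    using assms unfolding d by unfold_locales auto
  have q: "Qtilde d p lam = L0" unfolding Qtilde_def L0_eq d b_def Let_def by simp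
  have e: "lam ^ (d + 1) / (p * (real d - 1)^2 * (1 - (1 - p) * lam)^2) * (pi^2 / 6)
      = lam^(Suc (Suc (Suc m))) / (p * (real (Suc m))^2 * b^2) * (pi^2/6)"
    unfolding d b_def by simp
  show ?thesis unfolding q e using main Err_le by auto
qed

end
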